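(* Let $\alpha\in\mathbb R$ and let $\Sigma$ be a round sphere in $\mathbb R^3$ (with the origin removed if it lies on it). Then $\Sigma$ is $\alpha$-stationary if and only if either (1) $\alpha=-2$ and $\Sigma$ is centered at the origin, or (2) $\alpha=-4$ and $\Sigma$ contains the origin.
   Context: Let $\Sigma$ be a connected oriented surface immersed in $\mathbb R^3\setminus\{0\}$ with unit normal $\nu$ and mean curvature $H$ (sum of the principal curvatures, so a sphere of radius $r$ has $H=2/r$ for the inward normal). For $\alpha\in\mathbb R$, $\Sigma$ is called $\alpha$-stationary if $H(p)=\alpha\,\frac{\langle\nu(p),p\rangle}{|p|^2}$ for all $p\in\Sigma$. *)

theory Defs
  imports "HOL-Analysis.Analysis"
begin

text \<open>Mean curvature (sum of principal curvatures) at p of an oriented surface whose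
  unit normal field is (the restriction of) the differentiable map N, defined on a
  neighbourhood of the surface: H = - tr(dN restricted to the tangent plane)
  = -(tr dN - <dN(N p), N p>).  With this convention the round sphere of radius r
  with inward normal has H = 2/r.\<close>
definition mean_curvature :: "(real^3 \<Rightarrow> real^3) \<Rightarrow> real^3 \<Rightarrow> real" where
  "mean_curvature N p =
     - ((\<Sum>i\<in>Basis. inner (frechet_derivative N (at p) i) i)
        - inner (frechet_derivative N (at p) (N p)) (N p))"

text \<open>Unit normal field of the round sphere with centre c and radius r;
  s = 1 gives the inward normal, s = -1 the outward normal (the two orientations).\<close>
definition sphere_normal :: "real^3 \<Rightarrow> real \<Rightarrow> real \<Rightarrow> real^3 \<Rightarrow> real^3" where
  "sphere_normal c r s x = (s / r) *\<^sub>R (c - x)"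

definition alpha_stationary :: "real \<Rightarrow> (real^3) set \<Rightarrow> (real^3 \<Rightarrow> real^3) \<Rightarrow> bool" where
  "alpha_stationary \<alpha> S N \<longleftrightarrow>
     (\<forall>p\<in>S. mean_curvature N p = \<alpha> * inner (N p) p / (norm p)^2)"

end

theory Submission imports Defs begin
lemma mc: fixes r s :: real assumes "r > 0" "dist c p = r" "s \<in> {1,-1}"
  shows "mean_curvature (sphere_normal c r s) p = 2 * s / r"
proof -
  have d: "(sphere_normal c r s has_derivative (\<lambda>v. (-(s/r)) *\<^sub>R v)) (at p)"
    unfolding sphere_normal_def[abs_def]
    by (auto intro!: derivative_eq_intros simp: algebra_simps)
  have fd: "frechet_derivative (sphere_normal c r s) (at p) = (\<lambda>v. (-(s/r)) *\<^sub>R v)"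
    using frechet_derivative_at[OF d] by simp
  have s2: "s * s = 1" using assms(3) by auto
  have ab: "\<bar>s\<bar> = 1" using assms(3) by auto
  have nn: "norm (sphere_normal c r s p) = 1"
    using assms ab unfolding sphere_normal_def dist_norm by simp
  have n: "inner (sphere_normal c r s p) (sphere_normal c r s p) = 1"
    using nn by (simp add: power2_norm_eq_inner[symmetric])
  have sb: "(\<Sum>i\<in>(Basis::(real^3) set). inner ((-(s/r)) *\<^sub>R i) i) = -(s/r) * 3"
    by (simp add: inner_Basis sum_distrib_left[symmetric] )
  show ?thesis unfolding mean_curvature_def fd sb using n by simp
qed

lemma eqv: fixes r s \<alpha> :: real and c p :: "real^3"
  assumes "r > 0" "s \<noteq> 0" "p \<noteq> 0"
  shows "(2 * s / r = \<alpha> * inner (sphere_normal c r s p) p / (norm p)^2) \<longleftrightarrow>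
     2 * (norm p)^2 = \<alpha> * inner (c - p) p"
proof -
  have np: "(norm p)^2 > 0" using assms by simp
  have "(2 * s / r = \<alpha> * inner (sphere_normal c r s p) p / (norm p)^2) \<longleftrightarrow>
        (2 * s / r = (s / r) * (\<alpha> * inner (c - p) p) / (norm p)^2)"
    unfolding sphere_normal_def by (simp add: algebra_simps)
  also have "\<dots> \<longleftrightarrow> 2 * (norm p)^2 = \<alpha> * inner (c - p) p"
    using assms np by (auto simp: field_simps)
  finally show ?thesis .
qed

lemma line_pt: fixes c :: "real^3" and t :: real
  shows "inner (c - (1 + t) *\<^sub>R c) ((1 + t) *\<^sub>R c) = - t * (1 + t) * (norm c)^2"
    and "(norm ((1 + t) *\<^sub>R c))^2 = (1 + t)^2 * (norm c)^2"
    and "dist c ((1 + t) *\<^sub>R c) = \<bar>t\<bar> * norm c"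
proof -
  have "c - (1 + t) *\<^sub>R c = (- t) *\<^sub>R c" by (simp add: algebra_simps)
  then show "inner (c - (1 + t) *\<^sub>R c) ((1 + t) *\<^sub>R c) = - t * (1 + t) * (norm c)^2"
    by (simp add: power2_norm_eq_inner)
  show "(norm ((1 + t) *\<^sub>R c))^2 = (1 + t)^2 * (norm c)^2"
    by (simp add: power_mult_distrib)
  have "c - (1 + t) *\<^sub>R c = (- t) *\<^sub>R c" by (simp add: algebra_simps)
  then show "dist c ((1 + t) *\<^sub>R c) = \<bar>t\<bar> * norm c" by (simp add: dist_norm)
qed

theorem mainTheorem3:
  fixes \<alpha> r s :: real and c :: "real^3"
  assumes "r > 0" and "s \<in> {1, -1}"
  shows "alpha_stationary \<alpha> (sphere c r - {0}) (sphere_normal c r s) \<longleftrightarrow>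
           ((\<alpha> = -2 \<and> c = 0) \<or> (\<alpha> = -4 \<and> 0 \<in> sphere c r))"
proof -
  have s0: "s \<noteq> 0" using assms(2) by auto
  have key: "alpha_stationary \<alpha> (sphere c r - {0}) (sphere_normal c r s) \<longleftrightarrow>
     (\<forall>p. dist c p = r \<and> p \<noteq> 0 \<longrightarrow> 2 * (norm p)^2 = \<alpha> * inner (c - p) p)"
    unfolding alpha_stationary_def using mc[OF assms(1) _ assms(2)] eqv[OF assms(1) s0]
    by auto
  show ?thesis unfolding key
  proof
    assume H: "\<forall>p. dist c p = r \<and> p \<noteq> 0 \<longrightarrow> 2 * (norm p)^2 = \<alpha> * inner (c - p) p"
    show "(\<alpha> = -2 \<and> c = 0) \<or> (\<alpha> = -4 \<and> 0 \<in> sphere c r)"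
    proof (cases "c = 0")
      case True
      define p :: "real^3" where "p = r *\<^sub>R (axis 1 1)"
      have pn: "norm p = r" using assms(1) by (simp add: p_def)
      hence "p \<noteq> 0" using assms(1) by auto
      moreover have "dist c p = r" using True pn by simp
      ultimately have "2 * (norm p)^2 = \<alpha> * inner (c - p) p" using H by blast
      hence "2 * r^2 = - \<alpha> * r^2" using True pn by (simp add: power2_norm_eq_inner[symmetric])
      hence "(\<alpha> + 2) * r^2 = 0" by (simp add: algebra_simps)
      hence "\<alpha> = -2" using assms(1) by simp
      then show ?thesis using True by simp
    next
      case False
      define n where "n = norm c"
      define k where "k = r / n"
      have n0: "n > 0" using False n_def by simp
      have k0: "k > 0" using n0 assms(1) k_def by simp
      have kn: "k * n = r" using n0 k_def by simp
      have p1: "2 * (1 + k) = - \<alpha> * k"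
      proof -
        have "dist c ((1 + k) *\<^sub>R c) = r" using line_pt(3)[of c k] k0 kn n_def by simp
        moreover have "(1 + k) *\<^sub>R c \<noteq> 0" using k0 False by simp
        ultimately have "2 * (norm ((1 + k) *\<^sub>R c))^2 = \<alpha> * inner (c - (1 + k) *\<^sub>R c) ((1 + k) *\<^sub>R c)"
          using H by blast
        hence "2 * ((1 + k)^2 * n^2) = \<alpha> * (- k * (1 + k) * n^2)"
          unfolding line_pt(1,2) n_def .
        hence "(1 + k) * n^2 * (2 * (1 + k)) = (1 + k) * n^2 * (- \<alpha> * k)"
          by (simp add: algebra_simps power2_eq_square)
        moreover have "(1 + k) * n^2 \<noteq> 0" using k0 n0 by simp
        ultimately show ?thesis using mult_left_cancel by (metis mult_minus_right)
      qed
      show ?thesis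
      proof (cases "k = 1")
        case True
        then have "\<alpha> = -4" using p1 by simp
        moreover have "0 \<in> sphere c r" using kn True n_def by simp
        ultimately show ?thesis by simp
      next
        case k1: False
        have "2 * (1 - k) = \<alpha> * k"
        proof -
          have "dist c ((1 + (-k)) *\<^sub>R c) = r" using line_pt(3)[of c "-k"] k0 kn n_def by simp
          moreover have "(1 + (-k)) *\<^sub>R c \<noteq> 0" using k1 False by simp
          ultimately have "2 * (norm ((1 + (-k)) *\<^sub>R c))^2 = \<alpha> * inner (c - (1 + (-k)) *\<^sub>R c) ((1 + (-k)) *\<^sub>R c)"
            using H by blast
          hence "2 * ((1 + (-k))^2 * n^2) = \<alpha> * (- (-k) * (1 + (-k)) * n^2)"
            unfolding line_pt(1,2) n_def .
          hence "(1 - k) * n^2 * (2 * (1 - k)) = (1 - k) * n^2 * (\<alpha> * k)"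
            by (simp add: algebra_simps power2_eq_square)
          moreover have "(1 - k) * n^2 \<noteq> 0" using k1 n0 by simp
          ultimately show ?thesis using mult_left_cancel by metis
        qed
        with p1 have False by (simp add: algebra_simps)
        thus ?thesis ..
      qed
    qed
  next
    assume R: "(\<alpha> = -2 \<and> c = 0) \<or> (\<alpha> = -4 \<and> 0 \<in> sphere c r)"
    show "\<forall>p. dist c p = r \<and> p \<noteq> 0 \<longrightarrow> 2 * (norm p)^2 = \<alpha> * inner (c - p) p"
    proof (intro allI impI)
      fix p :: "real^3" assume P: "dist c p = r \<and> p \<noteq> 0"
      from R show "2 * (norm p)^2 = \<alpha> * inner (c - p) p"
      proof
        assume "\<alpha> = -2 \<and> c = 0" thus ?thesis by (simp add: power2_norm_eq_inner)
      next
        assume A: "\<alpha> = -4 \<and> 0 \<in> sphere c r"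
        have "norm c = r" using A by simp
        moreover have "norm (p - c) = r" using P by (simp add: dist_norm norm_minus_commute)
        ultimately have "inner (p - c) (p - c) = inner c c" by (simp add: power2_norm_eq_inner[symmetric])
        hence "inner p p = 2 * inner c p" by (simp add: inner_diff inner_commute)
        thus ?thesis using A by (simp add: power2_norm_eq_inner inner_diff algebra_simps)
      qed
    qed
  qed
qed
end
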